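(* For every $\tau\in\mathbb{Z}$, every integer $m\geq 1$ and every integer $l\geq 0$, the number \[ n_{m,l}(\tau)=\sum_{d\mid m,\ d\mid l}\frac{\mu(d)}{d^2}\,c_{\frac{m}{d},\frac{l}{d}}(\tau),\qquad c_{m,l}(\tau)=-\frac{(-1)^{m\tau+m+l}}{m^2}\binom{m}{l}\binom{m\tau+l-1}{m-1}, \] is an integer.
   Context: $\mu$ denotes the Möbius function; the sum runs over positive integers $d$ dividing both $m$ and $l$ (when $l=0$, every divisor $d$ of $m$ divides $l$). Binomial coefficients are used for all integer top arguments: for $n\geq 0$, $\binom{n}{k}$ is the usual binomial coefficient (zero if $k>n$), and for $n<0$ and $k\geq 0$ one sets $\binom{n}{k}=(-1)^k\binom{-n+k-1}{k}$. (These numbers are the genus-zero one-hole LMOV invariants of the resolved conifold with one Aganagic–Vafa brane in framing $\tau$.) *)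

theory Defs
  imports "HOL-Computational_Algebra.Computational_Algebra"
begin

definition moebius_mu :: "nat \<Rightarrow> int" where
  "moebius_mu d = (if squarefree d then (-1) ^ card (prime_factors d) else 0)"

definition int_binom :: "int \<Rightarrow> nat \<Rightarrow> int" where
  "int_binom n k = (if n \<ge> 0 then int (nat n choose k)
                    else (-1) ^ k * int (nat (-n + int k - 1) choose k))"

definition c_coeff :: "int \<Rightarrow> nat \<Rightarrow> nat \<Rightarrow> rat" where
  "c_coeff \<tau> m l = - ((-1) powi (int m * \<tau> + int m + int l)) / of_nat (m^2)
      * of_int (int_binom (int m) l) * of_int (int_binom (int m * \<tau> + int l - 1) (m - 1))"

definition n_inv :: "int \<Rightarrow> nat \<Rightarrow> nat \<Rightarrow> rat" where
  "n_inv \<tau> m l = (\<Sum>d \<in> {d. d dvd m \<and> d dvd l}.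
      of_int (moebius_mu d) / of_nat (d^2) * c_coeff \<tau> (m div d) (l div d))"

end

theory Submission
  imports Defs
begin


definition pd :: "nat \<Rightarrow> nat \<Rightarrow> rat \<Rightarrow> bool" where
  "pd p k q \<longleftrightarrow> (\<exists>a b. b \<noteq> 0 \<and> \<not> int p dvd b \<and> int p ^ k dvd a \<and> q = of_int a / of_int b)"

lemma pd_frac: "b \<noteq> 0 \<Longrightarrow> \<not> int p dvd b \<Longrightarrow> int p ^ k dvd a \<Longrightarrow> pd p k (of_int a / of_int b)"
  unfolding pd_def by blast

lemma pd_int: "int p ^ k dvd a \<Longrightarrow> prime p \<Longrightarrow> pd p k (of_int a)"
proof -
  assume a: "int p ^ k dvd a" "prime p"
  have "\<not> int p dvd 1" using a(2) using prime_gt_1_nat[OF a(2)]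
    by (metis int_ops(2) nat_dvd_1_iff_1 not_one_less_zero of_nat_dvd_iff less_irrefl)
  then show ?thesis using pd_frac[of 1 p k a] a by simp
qed

lemma pd_0: "prime p \<Longrightarrow> pd p k 0"
  using pd_int[of p k 0] by simp

lemma pd_mono: assumes "pd p k q" "j \<le> k" shows "pd p j q"
proof -
  obtain a b where ab: "b \<noteq> 0" "\<not> int p dvd b" "int p ^ k dvd a" "q = of_int a / of_int b"
    using assms(1) unfolding pd_def by blast
  have "int p ^ j dvd a" using ab(3) assms(2) le_imp_power_dvd dvd_trans by blast
  then show ?thesis using ab pd_frac by blast
qed

lemma pd_add: assumes "prime p" "pd p k q" "pd p k r" shows "pd p k (q + r)"
proof -
  obtain a b where ab: "b \<noteq> 0" "\<not> int p dvd b" "int p ^ k dvd a" "q = of_int a / of_int b"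
    using assms(2) unfolding pd_def by blast
  obtain c d where cd: "d \<noteq> 0" "\<not> int p dvd d" "int p ^ k dvd c" "r = of_int c / of_int d"
    using assms(3) unfolding pd_def by blast
  have pr: "prime (int p)" using assms(1) by simp
  have "\<not> int p dvd b * d" using ab cd pr by (simp add: prime_dvd_mult_iff)
  moreover have "int p ^ k dvd a * d + c * b" using ab cd by simp
  moreover have "q + r = of_int (a * d + c * b) / of_int (b * d)"
    using ab cd by (simp add: field_simps)
  ultimately show ?thesis using pd_frac[of "b*d" p k "a*d+c*b"] ab cd by simp
qed

lemma pd_uminus: assumes "pd p k q" shows "pd p k (- q)"
proof -
  obtain a b where ab: "b \<noteq> 0" "\<not> int p dvd b" "int p ^ k dvd a" "q = of_int a / of_int b"
    using assms(1) unfolding pd_def by blast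
  have "- q = of_int (-a) / of_int b" using ab by simp
  then show ?thesis using ab pd_frac[of b p k "-a"] by simp
qed

lemma pd_diff: "prime p \<Longrightarrow> pd p k q \<Longrightarrow> pd p k r \<Longrightarrow> pd p k (q - r)"
  using pd_add[of p k q "-r"] pd_uminus[of p k r] by simp

lemma pd_mult: assumes "prime p" "pd p k q" "pd p j r" shows "pd p (k + j) (q * r)"
proof -
  obtain a b where ab: "b \<noteq> 0" "\<not> int p dvd b" "int p ^ k dvd a" "q = of_int a / of_int b"
    using assms(2) unfolding pd_def by blast
  obtain c d where cd: "d \<noteq> 0" "\<not> int p dvd d" "int p ^ j dvd c" "r = of_int c / of_int d"
    using assms(3) unfolding pd_def by blast
  have pr: "prime (int p)" using assms(1) by simp
  have "\<not> int p dvd b * d" using ab cd pr by (simp add: prime_dvd_mult_iff)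
  moreover have "int p ^ (k + j) dvd a * c" using ab cd by (simp add: power_add mult_dvd_mono)
  moreover have "q * r = of_int (a * c) / of_int (b * d)"
    using ab cd by (simp add: field_simps)
  ultimately show ?thesis using pd_frac[of "b*d" p "k+j" "a*c"] ab cd by simp
qed

lemma pd_mult': "prime p \<Longrightarrow> pd p k q \<Longrightarrow> pd p j r \<Longrightarrow> i \<le> k + j \<Longrightarrow> pd p i (q * r)"
  using pd_mult pd_mono by blast

lemma pd_inv: "prime p \<Longrightarrow> \<not> int p dvd b \<Longrightarrow> pd p 0 (1 / of_int b)"
  using pd_frac[of b p 0 1] by (cases "b = 0") auto

lemma pd_sum: assumes "prime p" "\<And>i. i \<in> S \<Longrightarrow> pd p k (f i)" shows "pd p k (sum f S)"
  using assms(2)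
proof (induction S rule: infinite_finite_induct)
  case (infinite A) then show ?case using pd_0[OF assms(1)] by simp
next
  case empty then show ?case using pd_0[OF assms(1)] by simp
next
  case (insert x F) then show ?case using pd_add[OF assms(1)] by simp
qed

lemma pd_prod0: assumes "prime p" "\<And>i. i \<in> S \<Longrightarrow> pd p 0 (f i)" shows "pd p 0 (prod f S)"
  using assms(2)
proof (induction S rule: infinite_finite_induct)
  case (infinite A) then show ?case using pd_int[OF _ assms(1), of 0 1] by simp
next
  case empty then show ?case using pd_int[OF _ assms(1), of 0 1] by simp
next
  case (insert x F) then show ?case using pd_mult[OF assms(1), of 0 _ 0] by simp
qed

lemma pd_imp_dvd: assumes "prime p" "pd p k (of_int x)" shows "int p ^ k dvd x"
proof -
  obtain a b where ab: "b \<noteq> 0" "\<not> int p dvd b" "int p ^ k dvd a" "of_int x = (of_int a / of_int b :: rat)"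
    using assms(2) unfolding pd_def by blast
  have "of_int (x * b) = (of_int a :: rat)" using ab by (simp add: field_simps)
  then have "x * b = a" by (simp only: of_int_eq_iff)
  then have "int p ^ k dvd x * b" using ab by simp
  moreover have "coprime (int p ^ k) b"
    using ab(2) assms(1) by (simp add: prime_imp_coprime)
  ultimately show ?thesis using coprime_dvd_mult_left_iff by blast
qed

lemma pd_1: "prime p \<Longrightarrow> pd p 0 1"
  using pd_int[of p 0 1] by simp

lemma pd_of_nat: "prime p \<Longrightarrow> p ^ k dvd n \<Longrightarrow> pd p k (of_nat n)"
  using pd_int[of p k "int n"] by (metis of_int_of_nat_eq of_nat_dvd_iff of_nat_power)



fun psi :: "nat \<Rightarrow> nat \<Rightarrow> nat" where
  "psi p 0 = 1"
| "psi p (Suc n) = psi p n * (\<Prod>i\<in>{1..<p}. p*n+i)"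

lemma fact_add_prod: "fact (m + k) = (fact m :: nat) * (\<Prod>i\<in>{1..k}. m + i)"
proof (induction k)
  case 0 then show ?case by simp
next
  case (Suc k)
  have "fact (m + Suc k) = (m + Suc k) * (fact (m + k) :: nat)" by simp
  also have "\<dots> = fact m * ((\<Prod>i\<in>{1..k}. m + i) * (m + Suc k))" using Suc by (simp only: mult_ac)
  also have "(\<Prod>i\<in>{1..k}. m + i) * (m + Suc k) = (\<Prod>i\<in>{1..Suc k}. m + i)"
    by (simp add: prod.cl_ivl_Suc)
  finally show ?case .
qed

lemma fact_p: assumes "0 < p" shows "fact (p*n) = p^n * fact n * psi p n"
proof (induction n)
  case 0 then show ?case by simp
next
  case (Suc n)
  have e: "p * Suc n = p*n + p" by simp
  have "{1..p} = insert p {1..<p}" using assms by auto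
  then have "(\<Prod>i\<in>{1..p}. p*n + i) = (p*n+p) * (\<Prod>i\<in>{1..<p}. p*n + i)" by simp
  then have h: "fact (p*n + p) = (fact (p*n) :: nat) * ((p*n+p) * (\<Prod>i\<in>{1..<p}. p*n + i))"
    using fact_add_prod[of "p*n" p] by simp
  have "fact (p * Suc n) = (fact (p*n) :: nat) * ((p*n+p) * (\<Prod>i\<in>{1..<p}. p*n + i))"
    unfolding e by (rule h)
  also have "\<dots> = p^n * fact n * psi p n * ((p * Suc n) * (\<Prod>i\<in>{1..<p}. p*n + i))"
    using Suc by (simp add: algebra_simps)
  also have "\<dots> = p^Suc n * fact (Suc n) * psi p (Suc n)"
    by (simp add: algebra_simps)
  finally show ?case .
qed

lemma psi_pos: "0 < p \<Longrightarrow> 0 < psi p n"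
  by (induction n) (auto simp: prod_pos)

definition R :: "nat \<Rightarrow> nat \<Rightarrow> nat \<Rightarrow> rat" where
  "R p x y = of_nat (psi p (x+y)) / (of_nat (psi p x) * of_nat (psi p y))"

lemma R_sym: "R p x y = R p y x"
  unfolding R_def by (simp add: add.commute mult.commute)

lemma binom_p: assumes "0 < p" "b \<le> a"
  shows "(of_nat (p*a choose p*b) :: rat) = of_nat (a choose b) * R p b (a - b)"
proof -
  have pb: "p*b \<le> p*a" using assms by simp
  have e: "p*a - p*b = p*(a-b)" by (simp add: diff_mult_distrib2)
  have f: "\<And>n. (fact (p*n) :: rat) = of_nat p ^ n * fact n * of_nat (psi p n)"
    using fact_p[OF assms(1)] by (metis of_nat_fact of_nat_mult of_nat_power)
  have ps: "\<And>n. (of_nat (psi p n) :: rat) \<noteq> 0" using psi_pos[OF assms(1)] by simp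
  have pp: "(of_nat p :: rat) \<noteq> 0" using assms by simp
  have ab: "a = b + (a - b)" using assms by simp
  have pw: "(of_nat p :: rat) ^ a = of_nat p ^ b * of_nat p ^ (a-b)"
    by (subst ab) (simp add: power_add)
  have "(of_nat (p*a choose p*b) :: rat) = fact (p*a) / (fact (p*b) * fact (p*(a-b)))"
    using binomial_fact[OF pb] e by simp
  also have "\<dots> = (fact a / (fact b * fact (a-b))) *
       (of_nat (psi p (b + (a-b))) / (of_nat (psi p b) * of_nat (psi p (a-b))))"
    unfolding f using ps pp pw ab[symmetric] by (simp add: field_simps)
  also have "\<dots> = of_nat (a choose b) * R p b (a - b)"
    unfolding R_def binomial_fact[OF assms(2)] using ps ab[symmetric] by (simp add: field_simps)
  finally show ?thesis .
qed

lemma psi_add: "psi p (x + y) = psi p y * (\<Prod>c<x. \<Prod>i\<in>{1..<p}. p*(y+c)+i)"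
  by (induction x) (auto simp: algebra_simps)

lemma R_prod: assumes "0 < p"
  shows "R p x y = (\<Prod>c<x. \<Prod>i\<in>{1..<p}. 1 + of_nat (p*y) / of_nat (p*c+i))"
proof -
  have a1: "(of_nat (psi p (x+y)) :: rat) = of_nat (psi p y) * (\<Prod>c<x. \<Prod>i\<in>{1..<p}. of_nat (p*(y+c)+i))"
    using psi_add[of p x y] by simp
  have a2: "(of_nat (psi p x) :: rat) = (\<Prod>c<x. \<Prod>i\<in>{1..<p}. of_nat (p*c+i))"
    using psi_add[of p x 0] by simp
  have ps: "(of_nat (psi p y) :: rat) \<noteq> 0" using psi_pos[OF assms] by simp
  have "R p x y = (\<Prod>c<x. \<Prod>i\<in>{1..<p}. of_nat (p*(y+c)+i)) / (\<Prod>c<x. \<Prod>i\<in>{1..<p}. (of_nat (p*c+i) :: rat))"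
    unfolding R_def a1 a2 using ps by simp
  also have "\<dots> = (\<Prod>c<x. \<Prod>i\<in>{1..<p}. of_nat (p*(y+c)+i) / (of_nat (p*c+i) :: rat))"
    by (simp add: prod_dividef)
  also have "\<dots> = (\<Prod>c<x. \<Prod>i\<in>{1..<p}. 1 + of_nat (p*y) / of_nat (p*c+i))"
  proof (intro prod.cong refl)
    fix c i assume "i \<in> {1..<p}"
    then have "p*c+i \<noteq> 0" by simp
    then have "(of_nat (p*c+i) :: rat) \<noteq> 0" by (simp only: of_nat_eq_0_iff not_False_eq_True)
    then show "of_nat (p*(y+c)+i) / (of_nat (p*c+i) :: rat) = 1 + of_nat (p*y) / of_nat (p*c+i)"
      by (simp add: field_simps)
  qed
  finally show ?thesis .
qed



lemma pd_nat_frac: "prime p \<Longrightarrow> p ^ k dvd a \<Longrightarrow> \<not> p dvd b \<Longrightarrow> pd p k (of_nat a / of_nat b)"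
proof -
  assume h: "prime p" "p ^ k dvd a" "\<not> p dvd b"
  have "b \<noteq> 0" using h(3) by (metis dvd_0_right)
  moreover have "\<not> int p dvd int b" using h(3) by simp
  moreover have "int p ^ k dvd int a" using h(2) by (metis of_nat_dvd_iff of_nat_power)
  ultimately show ?thesis using pd_frac[of "int b" p k "int a"] by simp
qed

lemma pd_nat_inv: "prime p \<Longrightarrow> \<not> p dvd b \<Longrightarrow> pd p 0 (1 / of_nat b)"
  using pd_nat_frac[of p 0 1 b] by simp

lemma pd_le0: "pd p k q \<Longrightarrow> pd p 0 q"
  using pd_mono by blast

lemma prod_expand:
  assumes "prime p" "finite S" "\<And>i. i \<in> S \<Longrightarrow> pd p K (x i)"
  shows "pd p (2*K) ((\<Prod>i\<in>S. 1 + x i) - 1 - (\<Sum>i\<in>S. x i))"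
  using assms(2,3)
proof (induction S rule: finite_induct)
  case empty then show ?case using pd_0[OF assms(1)] by simp
next
  case (insert a F)
  let ?P = "\<Prod>i\<in>F. 1 + x i" and ?S = "\<Sum>i\<in>F. x i"
  have e: "(\<Prod>i\<in>insert a F. 1 + x i) - 1 - (\<Sum>i\<in>insert a F. x i)
      = (1 + x a) * (?P - 1 - ?S) + x a * ?S"
    using insert(1,2) by (simp add: algebra_simps)
  have xa: "pd p K (x a)" using insert by simp
  have h1: "pd p 0 (1 + x a)" using pd_add[OF assms(1) pd_1[OF assms(1)] pd_le0[OF xa]] .
  have h2: "pd p (2*K) (?P - 1 - ?S)" using insert by simp
  have h3: "pd p K ?S" by (rule pd_sum[OF assms(1)]) (use insert.prems in auto)
  have "pd p (2*K) ((1 + x a) * (?P - 1 - ?S))" using pd_mult[OF assms(1) h1 h2] by simp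
  moreover have "pd p (2*K) (x a * ?S)" using pd_mult[OF assms(1) xa h3] by (simp add: mult_2)
  ultimately show ?case unfolding e using pd_add[OF assms(1)] by blast
qed

lemma prod_expand2:
  assumes "prime p" "finite A" "\<And>c. c \<in> A \<Longrightarrow> finite (B c)"
    "\<And>c i. c \<in> A \<Longrightarrow> i \<in> B c \<Longrightarrow> pd p K (z c i)"
  shows "pd p (2*K) ((\<Prod>c\<in>A. \<Prod>i\<in>B c. 1 + z c i) - 1 - (\<Sum>c\<in>A. \<Sum>i\<in>B c. z c i))"
proof -
  define E where "E c = (\<Prod>i\<in>B c. 1 + z c i) - 1 - (\<Sum>i\<in>B c. z c i)" for c
  define y where "y c = (\<Sum>i\<in>B c. z c i) + E c" for c
  have hE: "pd p (2*K) (E c)" if "c \<in> A" for c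
    unfolding E_def using prod_expand[OF assms(1) assms(3)[OF that]] assms(4)[OF that] by blast
  have hS: "pd p K (\<Sum>i\<in>B c. z c i)" if "c \<in> A" for c
    using pd_sum[OF assms(1)] assms(4)[OF that] by blast
  have hy: "pd p K (y c)" if "c \<in> A" for c
    unfolding y_def using pd_add[OF assms(1) hS[OF that] pd_mono[OF hE[OF that]]] by simp
  have pe: "(\<Prod>i\<in>B c. 1 + z c i) = 1 + y c" for c unfolding y_def E_def by simp
  have "pd p (2*K) ((\<Prod>c\<in>A. 1 + y c) - 1 - (\<Sum>c\<in>A. y c))"
    using prod_expand[OF assms(1,2), of K y] hy by blast
  moreover have "pd p (2*K) (\<Sum>c\<in>A. E c)" using pd_sum[OF assms(1)] hE by blast
  moreover have "(\<Prod>c\<in>A. \<Prod>i\<in>B c. 1 + z c i) - 1 - (\<Sum>c\<in>A. \<Sum>i\<in>B c. z c i)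
      = ((\<Prod>c\<in>A. 1 + y c) - 1 - (\<Sum>c\<in>A. y c)) + (\<Sum>c\<in>A. E c)"
    unfolding pe y_def by (simp add: sum.distrib)
  ultimately show ?thesis using pd_add[OF assms(1)] by metis
qed

definition Hs :: "nat \<Rightarrow> nat \<Rightarrow> rat" where
  "Hs p x = (\<Sum>c<x. \<Sum>i\<in>{1..<p}. 1 / of_nat (p*c+i))"

lemma unit_not_dvd: fixes p c i :: nat assumes "prime p" "i \<in> {1..<p}" shows "\<not> p dvd (p*c+i)"
proof
  assume "p dvd (p*c+i)"
  then have "p dvd i" by (simp add: dvd_add_right_iff)
  moreover have "0 < i" using assms(2) by auto
  ultimately have "p \<le> i" using dvd_imp_le by blast
  then show False using assms(2) by auto
qed

lemma R_expand:
  assumes "prime p" "p ^ e dvd y"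
  shows "pd p (2*(1+e)) (R p x y - 1 - of_nat (p*y) * Hs p x)"
proof -
  have p0: "0 < p" using assms(1) prime_gt_0_nat by blast
  have z: "pd p (1+e) (of_nat (p*y) / of_nat (p*c+i))" if "i \<in> {1..<p}" for c i
  proof -
    have "p^(1+e) dvd p*y" using assms(2) by (simp add: mult_dvd_mono)
    then show ?thesis using pd_nat_frac[OF assms(1) _ unit_not_dvd[OF assms(1) that]] by blast
  qed
  have "pd p (2*(1+e)) ((\<Prod>c<x. \<Prod>i\<in>{1..<p}. 1 + of_nat (p*y) / of_nat (p*c+i)) - 1
      - (\<Sum>c<x. \<Sum>i\<in>{1..<p}. of_nat (p*y) / of_nat (p*c+i)))"
    by (rule prod_expand2[OF assms(1)]) (use z in auto)
  moreover have "(\<Sum>c<x. \<Sum>i\<in>{1..<p}. (of_nat (p*y) / of_nat (p*c+i) :: rat)) = of_nat (p*y) * Hs p x"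
    unfolding Hs_def by (simp add: sum_distrib_left)
  ultimately show ?thesis using R_prod[OF p0] by simp
qed



definition Ws :: "nat \<Rightarrow> nat \<Rightarrow> rat" where
  "Ws p x = (\<Sum>c<x. \<Sum>i\<in>{1..<p}. 1 / (of_nat (p*c+i) * of_nat (p*(x-1-c) + (p-i))))"

lemma refl_sum_outer: fixes x :: nat shows "(\<Sum>c<x. F (x-1-c)) = (\<Sum>c<x. (F c :: rat))"
  by (rule sum.reindex_bij_witness[of _ "\<lambda>c. x-1-c" "\<lambda>c. x-1-c"]) auto

lemma refl_sum_inner: fixes p :: nat shows "(\<Sum>i\<in>{1..<p}. G (p-i)) = (\<Sum>i\<in>{1..<p}. (G i :: rat))"
  by (rule sum.reindex_bij_witness[of _ "\<lambda>i. p-i" "\<lambda>i. p-i"]) auto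

lemma Hs_refl0: fixes p x :: nat shows
  "(\<Sum>c<x. \<Sum>i\<in>{1..<p}. 1 / (of_nat (p*c+i) :: rat)) =
   (\<Sum>c<x. \<Sum>i\<in>{1..<p}. 1 / (of_nat (p*(x-1-c)+(p-i)) :: rat))"
proof -
  define F where "F c = (\<Sum>i\<in>{1..<p}. 1 / (of_nat (p*c+i) :: rat))" for c
  define G where "G c i = 1 / (of_nat (p*c+i) :: rat)" for c i
  have "(\<Sum>c<x. F c) = (\<Sum>c<x. F (x-1-c))" by (rule refl_sum_outer[symmetric])
  also have "\<dots> = (\<Sum>c<x. \<Sum>i\<in>{1..<p}. G (x-1-c) (p-i))"
  proof (intro sum.cong refl)
    fix c
    have "F (x-1-c) = (\<Sum>i\<in>{1..<p}. G (x-1-c) i)" unfolding F_def G_def ..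
    also have "\<dots> = (\<Sum>i\<in>{1..<p}. G (x-1-c) (p-i))" by (rule refl_sum_inner[symmetric])
    finally show "F (x-1-c) = (\<Sum>i\<in>{1..<p}. G (x-1-c) (p-i))" .
  qed
  finally show ?thesis unfolding F_def G_def .
qed

lemma Hs_pair: assumes "0 < p" shows "2 * Hs p x = of_nat (p*x) * Ws p x"
proof -
  let ?g = "\<lambda>c i. 1 / (of_nat (p*c+i) :: rat)"
  have h1: "Hs p x = (\<Sum>c<x. \<Sum>i\<in>{1..<p}. ?g (x-1-c) (p-i))"
    unfolding Hs_def by (rule Hs_refl0)
  have "2 * Hs p x = Hs p x + Hs p x" by (rule mult_2)
  also have "\<dots> = (\<Sum>c<x. \<Sum>i\<in>{1..<p}. ?g c i) + (\<Sum>c<x. \<Sum>i\<in>{1..<p}. ?g (x-1-c) (p-i))"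
    using h1 unfolding Hs_def by (simp only:)
  also have "\<dots> = (\<Sum>c<x. \<Sum>i\<in>{1..<p}. ?g c i + ?g (x-1-c) (p-i))"
    by (simp only: sum.distrib)
  finally have "2 * Hs p x = (\<Sum>c<x. \<Sum>i\<in>{1..<p}. ?g c i + ?g (x-1-c) (p-i))" .
  also have "\<dots> = (\<Sum>c<x. \<Sum>i\<in>{1..<p}. of_nat (p*x) *
        (1 / (of_nat (p*c+i) * of_nat (p*(x-1-c) + (p-i)) :: rat)))"
  proof (intro sum.cong refl)
    fix c i assume c: "c \<in> {..<x}" and i: "i \<in> {1..<p}"
    define d where "d = x-1-c"
    have d: "x = c + 1 + d" using c unfolding d_def by simp
    have ip: "p - i + i = p" using i by simp
    have s: "p*(x-1-c) + (p-i) + (p*c+i) = p*x"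
    proof -
      have "p*(x-1-c) + (p-i) + (p*c+i) = p*d + p*c + (p - i + i)" unfolding d_def by simp
      also have "\<dots> = p*x" unfolding ip d by (simp add: algebra_simps)
      finally show ?thesis .
    qed
    have "p*c+i \<noteq> 0" using i by simp
    then have n1: "(of_nat (p*c+i) :: rat) \<noteq> 0" by (simp only: of_nat_eq_0_iff not_False_eq_True)
    have "p*(x-1-c) + (p-i) \<noteq> 0" using i by simp
    then have n2: "(of_nat (p*(x-1-c) + (p-i)) :: rat) \<noteq> 0" by (simp only: of_nat_eq_0_iff not_False_eq_True)
    have s': "(of_nat (p*(x-1-c) + (p-i)) :: rat) + of_nat (p*c+i) = of_nat (p*x)"
      using s by (metis of_nat_add)
    define A where "A = (of_nat (p*c+i) :: rat)"
    define B where "B = (of_nat (p*(x-1-c) + (p-i)) :: rat)"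
    have AB: "A \<noteq> 0" "B \<noteq> 0" "B + A = of_nat (p*x)" using n1 n2 s' unfolding A_def B_def by simp_all
    have "1 / A + 1 / B = (B + A) * (1 / (A * B))" using AB(1,2) by (simp add: field_simps)
    then have "1 / A + 1 / B = of_nat (p*x) * (1 / (A * B))" using AB(3) by simp
    then show "?g c i + ?g (x-1-c) (p-i) = of_nat (p*x) * (1 / (of_nat (p*c+i) * of_nat (p*(x-1-c) + (p-i))))"
      by (simp only: A_def B_def)
  qed
  also have "\<dots> = of_nat (p*x) * Ws p x"
    unfolding Ws_def by (simp only: sum_distrib_left)
  finally show ?thesis .
qed

lemma Ws_pd0: assumes "prime p" shows "pd p 0 (Ws p x)"
  unfolding Ws_def
proof (intro pd_sum[OF assms])
  fix c i assume i: "i \<in> {1..<p}"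
  then have a: "\<not> p dvd (p*c+i)" using unit_not_dvd[OF assms] by blast
  have "p - i \<in> {1..<p}" using i by auto
  then have b: "\<not> p dvd (p*(x-1-c)+(p-i))" using unit_not_dvd[OF assms, of "p-i" "x-1-c"] by blast
  have "\<not> p dvd (p*c+i) * (p*(x-1-c)+(p-i))"
    using a b assms by (simp add: prime_dvd_mult_iff)
  then show "pd p 0 (1 / (of_nat (p*c+i) * of_nat (p*(x-1-c) + (p-i))))"
    using pd_nat_inv[OF assms] by (metis of_nat_mult)
qed

lemma not_dvd_2: assumes "prime (p::nat)" "p \<noteq> 2" shows "\<not> p dvd 2"
proof
  assume "p dvd 2"
  then have "p \<le> 2" using dvd_imp_le by auto
  moreover have "2 \<le> p" using prime_ge_2_nat[OF assms(1)] .
  ultimately show False using assms(2) by simp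
qed

lemma Hs_odd: assumes "prime p" "p \<noteq> 2" "p ^ e dvd x" shows "pd p (1+e) (Hs p x)"
proof -
  have p0: "0 < p" using assms(1) prime_gt_0_nat by blast
  have h0: "2 * Hs p x = of_nat (p*x) * Ws p x" using Hs_pair[OF p0, of x] .
  have h: "Hs p x = (1 / of_nat 2) * (of_nat (p*x) * Ws p x)" unfolding h0[symmetric] by simp
  have h2: "pd p 0 (1 / of_nat 2)" using pd_nat_inv[OF assms(1) not_dvd_2[OF assms(1,2)]] .
  have "p^(1+e) dvd p*x" using assms(3) by (simp add: mult_dvd_mono)
  then have h3: "pd p (1+e) (of_nat (p*x))" using pd_of_nat[OF assms(1)] by blast
  have h4: "pd p (1+e+0) (of_nat (p*x) * Ws p x)" by (rule pd_mult[OF assms(1) h3 Ws_pd0[OF assms(1)]])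
  have "pd p (0+(1+e+0)) ((1 / of_nat 2) * (of_nat (p*x) * Ws p x))" by (rule pd_mult[OF assms(1) h2 h4])
  then show ?thesis unfolding h by simp
qed

lemma pd_odd_inv: assumes "odd b" shows "pd 2 1 (1 / of_nat b - 1)"
proof -
  have b0: "(of_nat b :: rat) \<noteq> 0" using assms odd_pos by fastforce
  have e: "1 / of_nat b - 1 = (of_int (1 - int b) / of_int (int b) :: rat)"
    using b0 by (simp add: diff_divide_distrib)
  have "2 dvd (1 - int b)" using assms by presburger
  moreover have "\<not> 2 dvd int b" using assms by presburger
  moreover have "int b \<noteq> 0" using assms odd_pos by fastforce
  ultimately show ?thesis unfolding e using pd_frac[of "int b" 2 1 "1 - int b"] by simp
qed

lemma sum1: "(\<Sum>i\<in>{1::nat}. f i) = (f 1 :: rat)" by simp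

lemma Ws2: "pd 2 1 (Ws 2 x - of_nat x)"
proof -
  have e: "{1..<2::nat} = {1}" by auto
  have "Ws 2 x - of_nat x = (\<Sum>c<x. 1 / (of_nat (2*c+1) * of_nat (2*(x-1-c) + (2-1))) - 1)"
    unfolding Ws_def e sum1 by (simp only: sum_subtractf sum_constant card_lessThan mult_1_right)
  moreover have "pd 2 1 (\<Sum>c<x. 1 / (of_nat (2*c+1) * of_nat (2*(x-1-c) + (2-1))) - (1::rat))"
  proof (intro pd_sum)
    fix c
    have "odd ((2*c+1) * (2*(x-1-c) + (2-1)))" by simp
    then show "pd 2 1 (1 / (of_nat (2*c+1) * of_nat (2*(x-1-c) + (2-1))) - 1)"
      using pd_odd_inv by (metis of_nat_mult)
  qed (rule two_is_prime_nat)
  ultimately show ?thesis by (simp only:)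
qed

lemma Hs2: "Hs 2 x = of_nat x * Ws 2 x"
  using Hs_pair[of 2 x] by simp



lemma core_gen:
  assumes "prime p" "p ^ e2 dvd y" "pd p h (Hs p x)" "K \<le> 2*(1+e2)" "K \<le> 1+e2+h"
  shows "pd p K (R p x y - 1)"
proof -
  have a: "pd p (2*(1+e2)) (R p x y - 1 - of_nat (p*y) * Hs p x)" by (rule R_expand[OF assms(1,2)])
  have "p^(1+e2) dvd p*y" using assms(2) by (simp add: mult_dvd_mono)
  then have "pd p (1+e2) (of_nat (p*y))" using pd_of_nat[OF assms(1)] by blast
  then have b: "pd p (1+e2+h) (of_nat (p*y) * Hs p x)" by (rule pd_mult[OF assms(1) _ assms(3)])
  have "pd p K ((R p x y - 1 - of_nat (p*y) * Hs p x) + of_nat (p*y) * Hs p x)"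
    by (rule pd_add[OF assms(1) pd_mono[OF a assms(4)] pd_mono[OF b assms(5)]])
  then show ?thesis by simp
qed

lemma core_odd:
  assumes "prime p" "p \<noteq> 2" "p ^ e1 dvd x" "p ^ e2 dvd y"
  shows "pd p (2+e1+e2) (R p x y - 1)"
proof (cases "e1 \<le> e2")
  case True
  show ?thesis by (rule core_gen[OF assms(1,4) Hs_odd[OF assms(1,2,3)]]) (use True in auto)
next
  case False
  have "pd p (2+e1+e2) (R p y x - 1)"
    by (rule core_gen[OF assms(1,3) Hs_odd[OF assms(1,2,4)]]) (use False in auto)
  then show ?thesis by (simp add: R_sym)
qed

lemma Hs2_pd: assumes "2 ^ e dvd x" shows "pd 2 e (Hs 2 x)"
proof -
  have "pd 2 (e+0) (of_nat x * Ws 2 x)"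
    by (rule pd_mult[OF two_is_prime_nat pd_of_nat[OF two_is_prime_nat assms] Ws_pd0[OF two_is_prime_nat]])
  then show ?thesis by (simp add: Hs2)
qed

lemma Hs2_pd_even: assumes "2 ^ e dvd x" "even x" shows "pd 2 (e+1) (Hs 2 x)"
proof -
  have a: "pd 2 1 (of_nat x)" using pd_of_nat[OF two_is_prime_nat, of 1 x] assms(2) by simp
  have "pd 2 1 (of_nat x + (Ws 2 x - of_nat x))" by (rule pd_add[OF two_is_prime_nat a Ws2])
  then have b: "pd 2 1 (Ws 2 x)" by simp
  have "pd 2 (e+1) (of_nat x * Ws 2 x)"
    by (rule pd_mult[OF two_is_prime_nat pd_of_nat[OF two_is_prime_nat assms(1)] b])
  then show ?thesis by (simp add: Hs2)
qed

lemma core2_weak: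
  assumes "2 ^ e1 dvd x" "2 ^ e2 dvd y"
  shows "pd 2 (1+e1+e2) (R 2 x y - 1)"
proof (cases "e1 \<le> e2")
  case True
  show ?thesis by (rule core_gen[OF two_is_prime_nat assms(2) Hs2_pd[OF assms(1)]]) (use True in auto)
next
  case False
  have "pd 2 (1+e1+e2) (R 2 y x - 1)"
    by (rule core_gen[OF two_is_prime_nat assms(1) Hs2_pd[OF assms(2)]]) (use False in auto)
  then show ?thesis by (simp add: R_sym)
qed

lemma core2_even:
  assumes "2 ^ e1 dvd x" "2 ^ e2 dvd y" "even x" "even y"
  shows "pd 2 (2+e1+e2) (R 2 x y - 1)"
proof (cases "e1 \<le> e2")
  case True
  show ?thesis by (rule core_gen[OF two_is_prime_nat assms(2) Hs2_pd_even[OF assms(1,3)]]) (use True in auto)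
next
  case False
  have "pd 2 (2+e1+e2) (R 2 y x - 1)"
    by (rule core_gen[OF two_is_prime_nat assms(1) Hs2_pd_even[OF assms(2,4)]]) (use False in auto)
  then show ?thesis by (simp add: R_sym)
qed

lemma core2_odd:
  assumes "odd x" "odd y"
  shows "pd 2 2 (R 2 x y + 1)"
proof -
  have pr: "prime (2::nat)" by (rule two_is_prime_nat)
  have a: "pd 2 2 (R 2 x y - 1 - of_nat (2*y) * Hs 2 x)" using R_expand[OF pr, of 0 y x] by simp
  define E where "E = Ws 2 x - of_nat x"
  have E: "pd 2 1 E" unfolding E_def by (rule Ws2)
  have H: "Hs 2 x = of_nat x * (of_nat x + E)" unfolding E_def Hs2 by simp
  have "even (1 + y*x*x)" using assms by simp
  then have "2^1 dvd (1 + y*x*x)" by simp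
  then have b1: "pd 2 1 (of_nat (1 + y*x*x))" by (rule pd_of_nat[OF pr])
  have b2: "pd 2 (0+1) (of_nat (y*x) * E)" by (rule pd_mult[OF pr pd_of_nat[OF pr] E]) simp
  have b: "pd 2 1 (of_nat (1 + y*x*x) + of_nat (y*x) * E)" using pd_add[OF pr b1] b2 by simp
  have two: "pd 2 1 (of_nat 2)" by (rule pd_of_nat[OF pr]) simp
  have c: "pd 2 2 (of_nat 2 * (of_nat (1 + y*x*x) + of_nat (y*x) * E))" using pd_mult[OF pr two b] by (simp only: one_add_one)
  have "pd 2 2 ((R 2 x y - 1 - of_nat (2*y) * Hs 2 x) + of_nat 2 * (of_nat (1 + y*x*x) + of_nat (y*x) * E))"
    by (rule pd_add[OF pr a c])
  moreover have "(R 2 x y - 1 - of_nat (2*y) * Hs 2 x) + of_nat 2 * (of_nat (1 + y*x*x) + of_nat (y*x) * E)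
     = R 2 x y + 1"
    unfolding H by (simp add: algebra_simps)
  ultimately show ?thesis by (simp only:)
qed



definition sg :: "nat \<Rightarrow> nat \<Rightarrow> nat \<Rightarrow> rat" where
  "sg p a b = (if p = 2 \<and> odd a \<and> odd b then -1 else 1)"

lemma pow2_odd: assumes "2 ^ e dvd (a::nat)" "odd a" shows "e = 0"
proof (rule ccontr)
  assume "e \<noteq> 0"
  then have "(2::nat) ^ 1 dvd 2 ^ e" by (simp add: le_imp_power_dvd)
  then have "2 dvd a" using assms(1) dvd_trans by auto
  then show False using assms(2) by simp
qed

lemma Rpd2: assumes "odd (a + b)" shows "pd 2 2 (R 2 a b - 1)"
proof (cases "even a")
  case True
  then have "2^1 dvd a" by simp
  with core2_weak[of 1 a 0 b] show ?thesis by (simp add: numeral_2_eq_2)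
next
  case False
  then have "even b" using assms by simp
  then have "2^1 dvd b" by simp
  with core2_weak[of 0 a 1 b] show ?thesis by (simp add: numeral_2_eq_2)
qed

lemma Rpd:
  assumes "prime p" "p ^ e1 dvd a" "p ^ e2 dvd b"
  shows "pd p (1+e1+e2+(if p = 2 \<and> odd (a+b) then 0 else 1)) (R p a b - sg p a b)"
proof (cases "p = 2")
  case False
  have "pd p (2+e1+e2) (R p a b - 1)" by (rule core_odd[OF assms(1) False assms(2,3)])
  moreover have "sg p a b = 1" unfolding sg_def using False by simp
  moreover have "1+e1+e2+(if p = 2 \<and> odd (a+b) then 0 else 1) = 2+e1+e2" using False by simp
  ultimately show ?thesis by simp
next
  case p2: True
  show ?thesis
  proof (cases "odd (a+b)")
    case True
    then have "\<not> (odd a \<and> odd b)" by auto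
    then have "sg p a b = 1" unfolding sg_def by simp
    moreover have "pd 2 (1+e1+e2) (R 2 a b - 1)" using core2_weak assms(2,3) p2 by blast
    ultimately show ?thesis using p2 True by simp
  next
    case ev: False
    show ?thesis
    proof (cases "odd a")
      case True
      then have ob: "odd b" using ev by auto
      have "e1 = 0" using pow2_odd True assms(2) p2 by blast
      moreover have "e2 = 0" using pow2_odd ob assms(3) p2 by blast
      moreover have "sg p a b = -1" unfolding sg_def using p2 True ob by simp
      moreover have "pd 2 2 (R 2 a b + 1)" by (rule core2_odd[OF True ob])
      ultimately show ?thesis using p2 ev by (simp add: numeral_2_eq_2)
    next
      case False
      then have "even b" using ev by auto
      then have "pd 2 (2+e1+e2) (R 2 a b - 1)" using core2_even[of e1 a e2 b] assms(2,3) p2 False by blast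
      moreover have "sg p a b = 1" unfolding sg_def using False by simp
      ultimately show ?thesis using p2 ev by simp
    qed
  qed
qed

lemma RpdI:
  assumes "prime p" "p ^ t dvd a" "p ^ t dvd b" "p = 2 \<and> odd (a+b) \<Longrightarrow> t = 0"
  shows "pd p (2+2*t) (R p a b - sg p a b)"
proof (cases "p = 2 \<and> odd (a+b)")
  case True
  then have "\<not> (odd a \<and> odd b)" by auto
  then show ?thesis using Rpd2 True assms(4) unfolding sg_def by simp
next
  case False
  then have "(if p = 2 \<and> odd (a+b) then 0 else 1) = (1::nat)" by simp
  then show ?thesis using Rpd[OF assms(1-3)] by (simp add: mult_2)
qed

lemma sg_pd0: assumes "prime p" "pd p k (R p a b - sg p a b)" shows "pd p 0 (R p a b)"
proof -
  have "pd p 0 (sg p a b)" unfolding sg_def using pd_1[OF assms(1)] pd_uminus by auto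
  then have "pd p 0 ((R p a b - sg p a b) + sg p a b)" using pd_add[OF assms(1) pd_le0[OF assms(2)]] by blast
  then show ?thesis by simp
qed

lemma DV:
  fixes p a X :: nat
  assumes "prime p" "p ^ t dvd a * X" "\<not> p ^ Suc u dvd a" "a \<noteq> 0"
  shows "p ^ (t - u) dvd X"
proof (cases "X = 0")
  case True then show ?thesis by simp
next
  case False
  have pe: "prime_elem p" using assms(1) by simp
  have nu: "\<not> is_unit p" using assms(1) by (simp add: prime_nat_iff)
  have aX: "a * X \<noteq> 0" using assms(4) False by simp
  have "t \<le> multiplicity p (a * X)" by (rule multiplicity_geI[OF aX nu assms(2)])
  also have "\<dots> = multiplicity p a + multiplicity p X"
    by (rule prime_elem_multiplicity_mult_distrib[OF pe assms(4) False])
  finally have t: "t \<le> multiplicity p a + multiplicity p X" .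
  have "multiplicity p a < Suc u" by (rule multiplicity_lessI[OF assms(4) nu assms(3)])
  then have "t - u \<le> multiplicity p X" using t by linarith
  then show ?thesis by (rule multiplicity_dvd')
qed

lemma binom_p1: assumes "0 < p" "1 \<le> M" "M \<le> A"
  shows "(of_nat (p*A - 1 choose (p*M - 1)) :: rat) = of_nat (A - 1 choose (M - 1)) * R p M (A - M)"
proof -
  have s1: "M * (A choose M) = A * (A - 1 choose (M - 1))"
    using Suc_times_binomial[of "M-1" "A-1"] assms by simp
  have pM: "1 \<le> p*M" using assms by simp
  have s2: "(p*M) * (p*A choose p*M) = (p*A) * (p*A - 1 choose (p*M - 1))"
    using Suc_times_binomial[of "p*M-1" "p*A-1"] assms pM by simp
  have b: "(of_nat (p*A choose p*M) :: rat) = of_nat (A choose M) * R p M (A - M)"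
    using binom_p[OF assms(1,3)] .
  have A0: "(of_nat A :: rat) \<noteq> 0" using assms by simp
  have p0: "(of_nat p :: rat) \<noteq> 0" using assms by simp
  have "(of_nat (p*A - 1 choose (p*M - 1)) :: rat) = of_nat M / of_nat A * of_nat (p*A choose p*M)"
    using arg_cong[OF s2, of "of_nat :: nat \<Rightarrow> rat"] A0 p0 by (simp add: field_simps)
  also have "\<dots> = (of_nat M * of_nat (A choose M) / of_nat A) * R p M (A - M)" unfolding b by simp
  also have "of_nat M * of_nat (A choose M) / of_nat A = (of_nat (A - 1 choose (M - 1)) :: rat)"
    using arg_cong[OF s1, of "of_nat :: nat \<Rightarrow> rat"] A0 by (simp add: field_simps)
  finally show ?thesis .
qed



lemma idv: "int p ^ k dvd int n \<longleftrightarrow> p ^ k dvd n"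
proof -
  have "int p ^ k = int (p ^ k)" by simp
  then show ?thesis by (simp only: int_dvd_int_iff)
qed

lemma even_int_diff: "even (int A - int L) \<or> even (int A + int L) \<Longrightarrow> even A = even L"
  by auto

lemma sigma_eq:
  fixes p M L A :: nat
  assumes "L \<le> M" "M \<le> A" "int M dvd int A - int L \<or> int M dvd int A + int L"
  shows "(if p = 2 then (-1)^(A-M) else 1 :: rat) = sg p L (M-L) * sg p M (A-M)"
proof (cases "p = 2")
  case False then show ?thesis unfolding sg_def by simp
next
  case p2: True
  show ?thesis
  proof (cases "odd M")
    case True
    have "odd (L + (M - L))" using True assms(1) by simp
    then have "\<not> (odd L \<and> odd (M-L))" by auto
    then have s1: "sg p L (M-L) = 1" unfolding sg_def by auto
    have s2: "sg p M (A-M) = (if odd (A-M) then -1 else 1)" unfolding sg_def using p2 True by simp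
    show ?thesis unfolding s1 s2 using p2 by (simp add: minus_one_power_iff)
  next
    case False
    have "2 dvd int M" using False by simp
    then have "2 dvd int A - int L \<or> 2 dvd int A + int L" using assms(3) dvd_trans by blast
    then have pa: "even A = even L" by (rule even_int_diff)
    have "even (A - M) = even A" using False assms(2) by simp
    moreover have "odd L = (odd L \<and> odd (M - L))" using False assms(1) by simp
    ultimately show ?thesis unfolding sg_def using p2 False pa by (simp add: minus_one_power_iff)
  qed
qed

lemma int_dvd_A:
  fixes p M L A :: nat
  assumes "p ^ k dvd M" "p ^ k dvd L" "int M dvd int A - int L \<or> int M dvd int A + int L"
  shows "p ^ k dvd A"
proof -
  have a: "int p ^ k dvd int M" using assms(1) idv by blast
  have b: "int p ^ k dvd int L" using assms(2) idv by blast
  have "int p ^ k dvd int A - int L \<or> int p ^ k dvd int A + int L" using assms(3) a dvd_trans by blast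
  then have "int p ^ k dvd int A"
  proof
    assume "int p ^ k dvd int A - int L"
    from dvd_add[OF this b] show ?thesis by simp
  next
    assume "int p ^ k dvd int A + int L"
    from dvd_diff[OF this b] show ?thesis by simp
  qed
  then show ?thesis using idv by blast
qed

lemma int_ndvd_A:
  fixes p M L A :: nat
  assumes "p ^ k dvd M" "\<not> p ^ k dvd L" "int M dvd int A - int L \<or> int M dvd int A + int L"
  shows "\<not> p ^ k dvd A"
proof
  assume h: "p ^ k dvd A"
  have a: "int p ^ k dvd int M" using assms(1) idv by blast
  have c: "int p ^ k dvd int A" using h idv by blast
  have "int p ^ k dvd int A - int L \<or> int p ^ k dvd int A + int L" using assms(3) a dvd_trans by blast
  then have "int p ^ k dvd int L"
  proof
    assume "int p ^ k dvd int A - int L"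
    from dvd_diff[OF c this] show ?thesis by simp
  next
    assume "int p ^ k dvd int A + int L"
    from dvd_diff[OF this c] show ?thesis by simp
  qed
  then have "p ^ k dvd L" using idv by blast
  then show False using assms(2) by simp
qed



lemma key:
  fixes p M L A :: nat
  assumes pr: "prime p" and M1: "1 \<le> M" and LM: "L \<le> M" and MA: "M \<le> A"
    and cg: "int M dvd int A - int L \<or> int M dvd int A + int L"
  shows "int p ^ (2 + 2*multiplicity p M) dvd
    (int (p*M choose p*L) * int (p*A - 1 choose (p*M - 1))
     - (if p = 2 then (-1)^(A-M) else 1) * (int (M choose L) * int (A - 1 choose (M - 1))))"
proof -
  define t where "t = multiplicity p M"
  have p0: "0 < p" using pr prime_gt_0_nat by blast
  define Y where "Y = (of_nat (M choose L) * of_nat (A - 1 choose (M - 1)) :: rat)"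
  define R1 where "R1 = R p L (M - L)"
  define R2 where "R2 = R p M (A - M)"
  define s1 where "s1 = sg p L (M - L)"
  define s2 where "s2 = sg p M (A - M)"
  have e1: "(of_nat (p*M choose p*L) :: rat) = of_nat (M choose L) * R1"
    unfolding R1_def by (rule binom_p[OF p0 LM])
  have e2: "(of_nat (p*A - 1 choose (p*M - 1)) :: rat) = of_nat (A - 1 choose (M - 1)) * R2"
    unfolding R2_def by (rule binom_p1[OF p0 M1 MA])
  have es: "(if p = 2 then (-1)^(A-M) else 1 :: rat) = s1 * s2"
    unfolding s1_def s2_def by (rule sigma_eq[OF LM MA cg])
  have s1pd: "pd p 0 s1" unfolding s1_def sg_def using pd_1[OF pr] pd_uminus by auto
  have tM: "p ^ t dvd M" unfolding t_def by (rule multiplicity_dvd)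
  have Ypd: "pd p 0 Y" unfolding Y_def using pd_of_nat[OF pr, of 0 "(M choose L) * (A - 1 choose (M - 1))"] by simp
  define Z where "Z = int (p*M choose p*L) * int (p*A - 1 choose (p*M - 1))
     - (if p = 2 then (-1)^(A-M) else 1) * (int (M choose L) * int (A - 1 choose (M - 1)))"
  have Zq: "(of_int Z :: rat) = Y * (R1 - s1) * R2 + s1 * (Y * (R2 - s2))"
  proof -
    have "(of_int Z :: rat) = of_nat (p*M choose p*L) * of_nat (p*A - 1 choose (p*M - 1))
        - (if p = 2 then (-1)^(A-M) else 1) * (of_nat (M choose L) * of_nat (A - 1 choose (M - 1)))"
      unfolding Z_def by simp
    also have "\<dots> = Y * R1 * R2 - s1 * s2 * Y" unfolding e1 e2 es Y_def by simp
    also have "\<dots> = Y * (R1 - s1) * R2 + s1 * (Y * (R2 - s2))" by (simp add: algebra_simps)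
    finally show ?thesis .
  qed
  have main: "pd p (2 + 2*t) (Y * (R1 - s1) * R2 + s1 * (Y * (R2 - s2)))"
  proof (cases "p ^ t dvd L")
    case True
    have tML: "p ^ t dvd M - L" using tM True by (rule dvd_diff_nat)
    have tA: "p ^ t dvd A" by (rule int_dvd_A[OF tM True cg])
    have tAM: "p ^ t dvd A - M" using tA tM by (rule dvd_diff_nat)
    have h1: "pd p (2+2*t) (R1 - s1)" unfolding R1_def s1_def
    proof (rule RpdI[OF pr True tML])
      assume "p = 2 \<and> odd (L + (M - L))"
      then have "odd M" "p = 2" using LM by auto
      then show "t = 0" using pow2_odd tM by blast
    qed
    have h2: "pd p (2+2*t) (R2 - s2)" unfolding R2_def s2_def
    proof (rule RpdI[OF pr tM tAM])
      assume "p = 2 \<and> odd (M + (A - M))"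
      then have "odd A" "p = 2" using MA by auto
      then show "t = 0" using pow2_odd tA by blast
    qed
    have R2pd: "pd p 0 R2" unfolding R2_def by (rule sg_pd0[OF pr h2[unfolded R2_def s2_def]])
    have a: "pd p (0 + (2+2*t) + 0) (Y * (R1 - s1) * R2)"
      by (rule pd_mult[OF pr pd_mult[OF pr Ypd h1] R2pd])
    have b: "pd p (0 + (0 + (2+2*t))) (s1 * (Y * (R2 - s2)))"
      by (rule pd_mult[OF pr s1pd pd_mult[OF pr Ypd h2]])
    show ?thesis using pd_add[OF pr] a b by simp
  next
    case False
    define u where "u = multiplicity p L"
    have L0: "L \<noteq> 0"
    proof
      assume "L = 0" then show False using False by simp
    qed
    have nu: "\<not> is_unit p" using pr by (simp add: prime_nat_iff)
    have uL: "p ^ u dvd L" unfolding u_def by (rule multiplicity_dvd)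
    have uL': "\<not> p ^ Suc u dvd L"
    proof
      assume "p ^ Suc u dvd L"
      then have "Suc u \<le> multiplicity p L" by (rule multiplicity_geI[OF L0 nu])
      then show False unfolding u_def by simp
    qed
    have ut: "u < t"
    proof (rule ccontr)
      assume "\<not> u < t"
      then have "p ^ t dvd p ^ u" by (simp add: le_imp_power_dvd)
      then show False using False uL dvd_trans by blast
    qed
    have uM: "p ^ u dvd M" using tM ut le_imp_power_dvd[of u t p] dvd_trans by auto
    have uML: "p ^ u dvd M - L" using uM uL by (rule dvd_diff_nat)
    have uA: "p ^ u dvd A" by (rule int_dvd_A[OF uM uL cg])
    have uAM: "p ^ u dvd A - M" using uA uM by (rule dvd_diff_nat)
    have sM: "p ^ Suc u dvd M" using tM ut le_imp_power_dvd[of "Suc u" t p] dvd_trans by auto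
    have uA': "\<not> p ^ Suc u dvd A" by (rule int_ndvd_A[OF sM uL' cg])
    have A0: "A \<noteq> 0" using M1 MA by simp
    have c1: "p ^ (t - u) dvd (M choose L)"
    proof (rule DV[OF pr _ uL' L0])
      have "L * (M choose L) = M * (M - 1 choose (L - 1))"
        using Suc_times_binomial[of "L-1" "M-1"] L0 M1 by simp
      then show "p ^ t dvd L * (M choose L)" using tM by simp
    qed
    have c2: "p ^ (t - u) dvd (A - 1 choose (M - 1))"
    proof (rule DV[OF pr _ uA' A0])
      have "A * (A - 1 choose (M - 1)) = M * (A choose M)"
        using Suc_times_binomial[of "M-1" "A-1"] M1 MA by simp
      then show "p ^ t dvd A * (A - 1 choose (M - 1))" using tM by simp
    qed
    have "p ^ (t - u) * p ^ (t - u) dvd (M choose L) * (A - 1 choose (M - 1))"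
      using c1 c2 by (rule mult_dvd_mono)
    then have "p ^ ((t - u) + (t - u)) dvd (M choose L) * (A - 1 choose (M - 1))"
      by (simp only: power_add)
    then have Ypd': "pd p ((t - u) + (t - u)) Y" unfolding Y_def using pd_of_nat[OF pr] by (metis of_nat_mult)
    have "pd p (1+u+u+(if p = 2 \<and> odd (L + (M - L)) then 0 else 1)) (R1 - s1)"
      unfolding R1_def s1_def by (rule Rpd[OF pr uL uML])
    moreover have "\<not> (p = 2 \<and> odd (L + (M - L)))"
    proof
      assume "p = 2 \<and> odd (L + (M - L))"
      then have "odd M" "p = 2" using LM by auto
      then have "t = 0" using pow2_odd tM by blast
      then show False using ut by simp
    qed
    then have "(if p = 2 \<and> odd (L + (M - L)) then 0 else 1) = (1::nat)" by (simp only: if_False)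
    ultimately have h1: "pd p (2+u+u) (R1 - s1)" by simp
    have h2': "pd p (1+t+u+(if p = 2 \<and> odd (M + (A - M)) then 0 else 1)) (R2 - s2)"
      unfolding R2_def s2_def by (rule Rpd[OF pr tM uAM])
    have h2: "pd p (1+t+u) (R2 - s2)" by (rule pd_mono[OF h2']) simp
    have R2pd: "pd p 0 R2" unfolding R2_def by (rule sg_pd0[OF pr h2[unfolded R2_def s2_def]])
    have a: "pd p (2 + 2*t) (Y * (R1 - s1) * R2)"
      by (rule pd_mult'[OF pr pd_mult[OF pr Ypd' h1] R2pd]) (use ut in simp)
    have b: "pd p (2 + 2*t) (s1 * (Y * (R2 - s2)))"
      by (rule pd_mult'[OF pr s1pd pd_mult[OF pr Ypd' h2]]) (use ut in simp)
    show ?thesis by (rule pd_add[OF pr a b])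
  qed
  have "pd p (2 + 2*t) (of_int Z)" using main Zq by simp
  then have "int p ^ (2 + 2*t) dvd Z" by (rule pd_imp_dvd[OF pr])
  then show ?thesis unfolding Z_def t_def .
qed



definition sgi :: "int \<Rightarrow> int" where "sgi k = (if even k then 1 else -1)"

lemma sgi_add: "sgi (a + b) = sgi a * sgi b"
  unfolding sgi_def by auto

lemma sgi_sq: "sgi a * sgi a = 1" unfolding sgi_def by auto

lemma sgi_mult_odd: "odd q \<Longrightarrow> sgi (q * k) = sgi k"
  unfolding sgi_def by auto

lemma sgi_mult_even: "even q \<Longrightarrow> sgi (q * k) = 1"
  unfolding sgi_def by auto

lemma sgi_pow: "(-1::int) ^ n = sgi (int n)"
  unfolding sgi_def by (simp add: minus_one_power_iff)

lemma sgi_uminus: "sgi (- a) = sgi a" unfolding sgi_def by auto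

lemma powi_sgi: "(-1::rat) powi k = of_int (sgi k)"
  unfolding sgi_def by (simp add: power_int_minus_left)

definition Uf :: "int \<Rightarrow> nat \<Rightarrow> nat \<Rightarrow> int" where
  "Uf \<tau> M L = sgi (int M * \<tau> + int M + int L) * int_binom (int M) L * int_binom (int M * \<tau> + int L - 1) (M - 1)"

lemma c_coeff_Uf: "c_coeff \<tau> M L = - of_int (Uf \<tau> M L) / of_nat (M^2)"
  unfolding c_coeff_def Uf_def powi_sgi by simp

lemma ib_pos: "0 \<le> n \<Longrightarrow> int_binom n k = int (nat n choose k)"
  unfolding int_binom_def by simp

lemma ib_neg: "n < 0 \<Longrightarrow> int_binom n k = (-1)^k * int (nat (-n + int k - 1) choose k)"
  unfolding int_binom_def by simp

lemma ib_nat: "int_binom (int M) L = int (M choose L)"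
  unfolding int_binom_def by simp

lemma second_factor:
  fixes M :: nat and N :: int
  assumes "1 \<le> M" "N \<noteq> 0"
  obtains A s where "1 \<le> A" "s = 1 \<or> s = -1" "int_binom (N - 1) (M - 1) = s * int (A - 1 choose (M - 1))"
     "int A = N \<or> int A = int M - N"
proof (cases "N \<ge> 1")
  case True
  have "int_binom (N - 1) (M - 1) = 1 * int (nat N - 1 choose (M - 1))"
    using True by (simp add: ib_pos nat_diff_distrib)
  moreover have "int (nat N) = N" using True by simp
  moreover have "1 \<le> nat N" using True by simp
  ultimately show ?thesis using that by blast
next
  case False
  then have N0: "N < 0" using assms(2) by simp
  have e: "nat (- (N - 1) + int (M - 1) - 1) = nat (int M - N) - 1" using assms(1) N0 by simp
  have "int_binom (N - 1) (M - 1) = (-1)^(M-1) * int (nat (int M - N) - 1 choose (M - 1))"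
  proof -
    have N1: "N - 1 < 0" using N0 by simp
    show ?thesis unfolding ib_neg[OF N1] e by (rule refl)
  qed
  moreover have "(-1::int)^(M-1) = 1 \<or> (-1::int)^(M-1) = -1" by (simp add: minus_one_power_iff)
  moreover have "int (nat (int M - N)) = int M - N" using N0 by simp
  moreover have "1 \<le> nat (int M - N)" using N0 assms(1) by simp
  ultimately show ?thesis using that by blast
qed

lemma lemA:
  fixes M L :: nat
  assumes pr: "prime p" and M1: "1 \<le> M" and nd: "\<not> (p dvd M \<and> p dvd L)"
  shows "int p ^ (2 * multiplicity p M) dvd Uf \<tau> M L"
proof (cases "p dvd M")
  case False
  then have "multiplicity p M = 0" by (simp add: not_dvd_imp_multiplicity_0)
  then show ?thesis by simp
next
  case True
  then have pL: "\<not> p dvd L" using nd by simp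
  define t where "t = multiplicity p M"
  have tM: "p ^ t dvd M" unfolding t_def by (rule multiplicity_dvd)
  have L0: "L \<noteq> 0"
  proof
    assume "L = 0" then show False using pL by simp
  qed
  have p1: "\<not> p ^ Suc 0 dvd L" using pL by simp
  have c1: "p ^ (t - 0) dvd (M choose L)"
  proof (rule DV[OF pr _ p1 L0])
    have "L * (M choose L) = M * (M - 1 choose (L - 1))"
      using Suc_times_binomial[of "L-1" "M-1"] L0 M1 by simp
    then show "p ^ t dvd L * (M choose L)" using tM by simp
  qed
  define N where "N = int M * \<tau> + int L"
  have pN: "\<not> int p dvd N"
  proof
    assume "int p dvd N"
    moreover have "int p dvd int M * \<tau>" using True by simp
    ultimately have "int p dvd N - int M * \<tau>" by (rule dvd_diff)
    then have "int p dvd int L" unfolding N_def by simp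
    then show False using pL by simp
  qed
  then have N0: "N \<noteq> 0" by auto
  obtain A s where A: "1 \<le> A" "s = 1 \<or> s = -1" "int_binom (N - 1) (M - 1) = s * int (A - 1 choose (M - 1))"
     "int A = N \<or> int A = int M - N" using second_factor[OF M1 N0] by blast
  have pA: "\<not> p ^ Suc 0 dvd A"
  proof
    assume "p ^ Suc 0 dvd A"
    then have "int p dvd int A" by simp
    have pM: "int p dvd int M" using True by simp
    from A(4) have "int p dvd N"
    proof
      assume "int A = N" then show ?thesis using \<open>int p dvd int A\<close> by simp
    next
      assume h: "int A = int M - N"
      have "int p dvd int M - int A" using pM \<open>int p dvd int A\<close> by (rule dvd_diff)
      then show ?thesis using h by simp
    qed
    then show False using pN by simp
  qed
  have c2: "p ^ (t - 0) dvd (A - 1 choose (M - 1))"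
  proof (rule DV[OF pr _ pA])
    have "A * (A - 1 choose (M - 1)) = M * (A choose M)"
      using Suc_times_binomial[of "M-1" "A-1"] M1 A(1) by simp
    then show "p ^ t dvd A * (A - 1 choose (M - 1))" using tM by simp
    show "A \<noteq> 0" using A(1) by simp
  qed
  have "int p ^ t dvd int (M choose L)" using c1 idv by simp
  moreover have "int p ^ t dvd int (A - 1 choose (M - 1))" using c2 idv by simp
  ultimately have "int p ^ t * int p ^ t dvd int (M choose L) * int (A - 1 choose (M - 1))"
    by (rule mult_dvd_mono)
  then have "int p ^ (2*t) dvd int (M choose L) * int (A - 1 choose (M - 1))"
    by (simp add: mult_2 power_add)
  moreover have "Uf \<tau> M L = (sgi (int M * \<tau> + int M + int L) * s) * (int (M choose L) * int (A - 1 choose (M - 1)))"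
  proof -
    have "Uf \<tau> M L = sgi (int M * \<tau> + int M + int L) * int (M choose L) * int_binom (N - 1) (M - 1)"
      unfolding Uf_def ib_nat N_def ..
    also have "\<dots> = (sgi (int M * \<tau> + int M + int L) * s) * (int (M choose L) * int (A - 1 choose (M - 1)))"
      unfolding A(3) by (simp only: mult_ac)
    finally show ?thesis .
  qed
  ultimately show ?thesis unfolding t_def by (simp only: dvd_mult)
qed



lemma mult_pM: fixes p M :: nat assumes "prime p" "1 \<le> M" shows "multiplicity p (p * M) = Suc (multiplicity p M)"
  by (rule multiplicity_times_same) (use assms in \<open>auto simp: prime_nat_iff\<close>)

lemma odd_int_prime: assumes "p \<noteq> 2" "prime p" shows "odd (int p)"
proof -
  have "p > 2" using prime_ge_2_nat[OF assms(2)] assms(1) by simp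
  then have "odd p" using prime_odd_nat[OF assms(2)] by simp
  then show ?thesis by simp
qed

lemma Uf_zero: "M < L \<Longrightarrow> Uf \<tau> M L = 0"
  unfolding Uf_def ib_nat by simp

lemma Uf_zero2: assumes "1 \<le> N" "N < int M" "N = int M * \<tau> + int L" shows "Uf \<tau> M L = 0"
proof -
  have "nat (N - 1) < M - 1" using assms(1,2) by linarith
  then have "int_binom (N - 1) (M - 1) = 0" using assms(1) by (simp add: ib_pos)
  then show ?thesis unfolding Uf_def assms(3) by simp
qed

lemma lemB:
  fixes M L :: nat
  assumes pr: "prime p" and M1: "1 \<le> M"
  shows "int p ^ (2 * multiplicity p (p * M)) dvd Uf \<tau> (p * M) (p * L) - Uf \<tau> M L"
proof -
  define t where "t = multiplicity p M"
  have ex: "2 * multiplicity p (p * M) = 2 + 2 * t" unfolding t_def mult_pM[OF pr M1] by simp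
  have p1: "1 \<le> p" using pr prime_gt_0_nat by (simp add: Suc_leI)
  define N where "N = int M * \<tau> + int L"
  have pN: "int (p*M) * \<tau> + int (p*L) = int p * N" unfolding N_def by (simp add: algebra_simps)
  have sp: "int (p*M) * \<tau> + int (p*M) + int (p*L) = int p * (N + int M)" unfolding N_def by (simp add: algebra_simps)
  have s1: "int M * \<tau> + int M + int L = N + int M" unfolding N_def by simp
  have U1: "Uf \<tau> (p*M) (p*L) = sgi (int p * (N + int M)) * int (p*M choose p*L) * int_binom (int p * N - 1) (p*M - 1)"
    by (simp only: Uf_def ib_nat sp pN)
  have s2: "int M * \<tau> + int L - 1 = N - 1" unfolding N_def ..
  have U0: "Uf \<tau> M L = sgi (N + int M) * int (M choose L) * int_binom (N - 1) (M - 1)"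
    by (simp only: Uf_def ib_nat s1 s2)
  show ?thesis unfolding ex
  proof (cases "L \<le> M")
    case False
    then have "Uf \<tau> (p*M) (p*L) = 0" "Uf \<tau> M L = 0" using Uf_zero p1 by auto
    then show "int p ^ (2 + 2 * t) dvd Uf \<tau> (p * M) (p * L) - Uf \<tau> M L" by simp
  next
    case LM: True
    show "int p ^ (2 + 2 * t) dvd Uf \<tau> (p * M) (p * L) - Uf \<tau> M L"
    proof (cases "N \<ge> int M")
      case True
      define A where "A = nat N"
      have iA: "int A = N" unfolding A_def using True by simp
      have MA: "M \<le> A" using True iA by simp
      have cg: "int M dvd int A - int L \<or> int M dvd int A + int L" unfolding iA N_def by simp
      define X' where "X' = int (p*M choose p*L) * int (p*A - 1 choose (p*M - 1))"
      define X where "X = int (M choose L) * int (A - 1 choose (M - 1))"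
      define \<sigma> where "\<sigma> = (if p = 2 then (-1)^(A-M) else (1::int))"
      have K: "int p ^ (2 + 2*t) dvd X' - \<sigma> * X"
        unfolding X'_def X_def \<sigma>_def t_def by (rule key[OF pr M1 LM MA cg])
      have b1: "int_binom (int p * N - 1) (p*M - 1) = int (p*A - 1 choose (p*M - 1))"
      proof -
        have "0 \<le> int p * N - 1" using True M1 p1 by (simp add: iA[symmetric] Suc_le_eq)
        moreover have "nat (int p * N - 1) = p*A - 1" unfolding iA[symmetric] by (simp add: nat_diff_distrib' of_nat_mult[symmetric] del: of_nat_mult)
        ultimately show ?thesis by (simp add: ib_pos)
      qed
      have b0: "int_binom (N - 1) (M - 1) = int (A - 1 choose (M - 1))"
      proof -
        have "0 \<le> N - 1" using True M1 by simp
        moreover have "nat (N - 1) = A - 1" unfolding A_def by (simp add: nat_diff_distrib')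
        ultimately show ?thesis by (simp add: ib_pos)
      qed
      define \<epsilon> where "\<epsilon> = sgi (int p * (N + int M))"
      have sig: "sgi (N + int M) = \<epsilon> * \<sigma>"
      proof (cases "p = 2")
        case True
        have "sgi (int (A - M)) = sgi (N + int M)" using MA iA unfolding sgi_def by (auto simp: of_nat_diff)
        moreover have "\<epsilon> = 1" unfolding \<epsilon>_def by (rule sgi_mult_even) (use True in simp)
        ultimately show ?thesis unfolding \<sigma>_def using True by (simp add: sgi_pow)
      next
        case False
        then have "odd (int p)" using pr by (rule odd_int_prime)
        then show ?thesis unfolding \<epsilon>_def \<sigma>_def using False by (simp add: sgi_mult_odd)
      qed
      have "Uf \<tau> (p * M) (p * L) - Uf \<tau> M L = \<epsilon> * (X' - \<sigma> * X)"
        unfolding U1 U0 b1 b0 sig X'_def X_def \<epsilon>_def by (simp add: algebra_simps)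
      then show ?thesis using K by simp
    next
      case NM: False
      show ?thesis
      proof (cases "N \<ge> 1")
        case True
        have "Uf \<tau> M L = 0" by (rule Uf_zero2[OF True _ N_def]) (use NM in simp)
        moreover have "Uf \<tau> (p*M) (p*L) = 0"
        proof (rule Uf_zero2[of "int p * N"])
          have "(1::int) \<le> int p" using p1 by simp
          then show "1 \<le> int p * N" using True mult_mono[of 1 "int p" 1 N] by simp
          show "int p * N < int (p * M)" using NM p1 by simp
          show "int p * N = int (p * M) * \<tau> + int (p * L)" using pN by simp
        qed
        ultimately show ?thesis by simp
      next
        case N0: False
        define A where "A = nat (int M - N)"
        have iA: "int A = int M - N" unfolding A_def using N0 by simp
        have MA: "M \<le> A" using N0 iA by simp
        have cg: "int M dvd int A - int L \<or> int M dvd int A + int L"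
        proof -
          have "int A + int L = int M * (1 - \<tau>)" unfolding iA N_def by (simp add: algebra_simps)
          then show ?thesis by simp
        qed
        define X' where "X' = int (p*M choose p*L) * int (p*A - 1 choose (p*M - 1))"
        define X where "X = int (M choose L) * int (A - 1 choose (M - 1))"
        define \<sigma> where "\<sigma> = (if p = 2 then (-1)^(A-M) else (1::int))"
        have K: "int p ^ (2 + 2*t) dvd X' - \<sigma> * X"
          unfolding X'_def X_def \<sigma>_def t_def by (rule key[OF pr M1 LM MA cg])
        have b1: "int_binom (int p * N - 1) (p*M - 1) = (-1)^(p*M-1) * int (p*A - 1 choose (p*M - 1))"
        proof -
          have "N \<le> 0" using N0 by simp
          then have "int p * N \<le> 0" by (simp add: mult_nonneg_nonpos)
          then have n: "int p * N - 1 < 0" by simp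
          have "nat (- (int p * N - 1) + int (p*M - 1) - 1) = p*A - 1"
          proof -
            have "- (int p * N - 1) + int (p*M - 1) - 1 = int p * int A - 1"
              using M1 p1 unfolding iA by (simp add: of_nat_diff algebra_simps)
            then show ?thesis by (simp add: nat_diff_distrib' of_nat_mult[symmetric] del: of_nat_mult)
          qed
          then show ?thesis unfolding ib_neg[OF n] by simp
        qed
        have b0: "int_binom (N - 1) (M - 1) = (-1)^(M-1) * int (A - 1 choose (M - 1))"
        proof -
          have n: "N - 1 < 0" using N0 by simp
          have "nat (- (N - 1) + int (M - 1) - 1) = A - 1"
            using M1 unfolding A_def by (simp add: of_nat_diff nat_diff_distrib')
          then show ?thesis unfolding ib_neg[OF n] by simp
        qed
        define \<epsilon> where "\<epsilon> = sgi (int p * (N + int M)) * (-1)^(p*M-1)"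
        have sig: "sgi (N + int M) * (-1)^(M-1) = \<epsilon> * \<sigma>"
        proof (cases "p = 2")
          case True
          have a: "(-1::int)^(A-M) = sgi N" using MA iA unfolding sgi_pow sgi_def by (auto simp: of_nat_diff)
          have b: "(-1::int)^(2*M-1) = -1" using M1 by (simp add: minus_one_power_iff)
          have c: "(-1::int)^(M-1) = sgi (int M - 1)" using M1 unfolding sgi_pow by (simp add: of_nat_diff)
          have "sgi (N + int M) * sgi (int M - 1) = - sgi N" unfolding sgi_def by auto
          moreover have "sgi (int p * (N + int M)) = 1" by (rule sgi_mult_even) (use True in simp)
          ultimately show ?thesis unfolding \<epsilon>_def \<sigma>_def using True a b c by simp
        next
          case False
          then have o: "odd (int p)" using pr by (rule odd_int_prime)
          have "(-1::int)^(p*M-1) = sgi (int p * int M - 1)" using M1 p1 unfolding sgi_pow by (simp add: of_nat_diff)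
          also have "\<dots> = sgi (int p * int M) * sgi (-1)" using sgi_add[of "int p * int M" "-1"] by simp
          also have "\<dots> = sgi (int M) * sgi (-1)" using o by (simp add: sgi_mult_odd)
          also have "\<dots> = sgi (int M - 1)" using sgi_add[of "int M" "-1"] by simp
          also have "\<dots> = (-1)^(M-1)" using M1 unfolding sgi_pow by (simp add: of_nat_diff)
          finally have "(-1::int)^(p*M-1) = (-1)^(M-1)" .
          then show ?thesis unfolding \<epsilon>_def \<sigma>_def using False o by (simp add: sgi_mult_odd)
        qed
        have "Uf \<tau> (p * M) (p * L) - Uf \<tau> M L = \<epsilon> * (X' - \<sigma> * X)"
        proof -
          have "Uf \<tau> (p * M) (p * L) = \<epsilon> * X'" unfolding U1 b1 \<epsilon>_def X'_def by (simp add: algebra_simps)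
          moreover have "Uf \<tau> M L = (sgi (N + int M) * (-1)^(M-1)) * X" unfolding U0 b0 X_def by (simp add: algebra_simps)
          ultimately show ?thesis unfolding sig by (simp add: algebra_simps)
        qed
        then show ?thesis using K by simp
      qed
    qed
  qed
qed



lemma mu_p2: fixes p d :: nat assumes "prime p" "p^2 dvd d" shows "moebius_mu d = 0"
proof -
  have "\<not> squarefree d"
  proof
    assume "squarefree d"
    then have "p dvd 1" using assms(2) unfolding squarefree_def by blast
    then show False using assms(1) by simp
  qed
  then show ?thesis unfolding moebius_mu_def by simp
qed

lemma mu_pd: fixes p d :: nat assumes "prime p" "\<not> p dvd d" "d \<noteq> 0"
  shows "moebius_mu (p * d) = - moebius_mu d"
proof -
  have cop: "coprime p d" using assms(1,2) by (simp add: prime_imp_coprime)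
  have sq: "squarefree (p*d) = squarefree d"
    using squarefree_multD(2)[of p d] squarefree_mult_coprime[OF cop squarefree_prime[OF assms(1)]] by blast
  have pf: "prime_factors (p*d) = insert p (prime_factors d)"
    using prime_factorization_times_prime[OF assms(3,1)] by simp
  have pn: "p \<notin> prime_factors d" using assms(2) by (simp add: in_prime_factors_iff)
  have "card (prime_factors (p*d)) = Suc (card (prime_factors d))"
    unfolding pf using pn by simp
  then show ?thesis unfolding moebius_mu_def sq by simp
qed

lemma dvd_from_primes:
  fixes n :: nat and S :: int
  assumes "n \<noteq> 0" "\<And>p. prime p \<Longrightarrow> int p ^ multiplicity p n dvd S"
  shows "int n dvd S"
proof (cases "S = 0")
  case True then show ?thesis by simp
next
  case False
  have "n dvd nat \<bar>S\<bar>"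
  proof (rule multiplicity_le_imp_dvd[OF assms(1)])
    fix p :: nat assume pr: "prime p"
    have "int (p ^ multiplicity p n) dvd S" using assms(2)[OF pr] by simp
    then have "int (p ^ multiplicity p n) dvd \<bar>S\<bar>" by (simp only: dvd_abs_iff)
    moreover have "\<bar>S\<bar> = int (nat \<bar>S\<bar>)" by simp
    ultimately have "int (p ^ multiplicity p n) dvd int (nat \<bar>S\<bar>)" by simp
    then have "p ^ multiplicity p n dvd nat \<bar>S\<bar>" by (simp only: int_dvd_int_iff)
    moreover have "nat \<bar>S\<bar> \<noteq> 0" using False by simp
    moreover have "\<not> is_unit p" using pr by (simp add: prime_nat_iff)
    ultimately show "multiplicity p n \<le> multiplicity p (nat \<bar>S\<bar>)"
      using multiplicity_geI by blast
  qed
  then have "int n dvd int (nat \<bar>S\<bar>)" by (simp only: int_dvd_int_iff)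
  then show ?thesis by simp
qed



lemma mult_div_eq: fixes p d m :: nat
  assumes "prime p" "\<not> p dvd d" "d dvd m"
  shows "multiplicity p (m div d) = multiplicity p m"
proof -
  have "m = d * (m div d)" using assms(3) by simp
  then have "multiplicity p m = multiplicity p (d * (m div d))" by simp
  also have "\<dots> = multiplicity p (m div d)"
    by (rule multiplicity_prime_elem_times_other) (use assms in auto)
  finally show ?thesis by simp
qed

lemma div_pd: fixes p d m :: nat assumes "p * d dvd m" "0 < p" "d \<noteq> 0"
  shows "m div d = p * (m div (p * d))"
proof -
  obtain k where k: "m = p * d * k" using assms(1) by blast
  have "m div d = p * k" unfolding k using assms(3) by simp
  moreover have "m div (p * d) = k" unfolding k using assms(2,3) by simp
  ultimately show ?thesis by simp
qed

lemma pd_dvd: fixes p d m :: nat assumes "p dvd m div d" "d dvd m" shows "p * d dvd m"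
proof -
  obtain q where q: "m div d = p * q" using assms(1) by blast
  have "m = d * (m div d)" using assms(2) by simp
  also have "\<dots> = (p * d) * q" unfolding q by simp
  finally show ?thesis by simp
qed

lemma per_prime:
  fixes p m l :: nat and \<tau> :: int
  assumes pr: "prime p" and m1: "1 \<le> m"
  shows "int p ^ (2 * multiplicity p m) dvd (\<Sum>d\<in>{d. d dvd m \<and> d dvd l}. moebius_mu d * Uf \<tau> (m div d) (l div d))"
proof -
  define D where "D = {d. d dvd m \<and> d dvd l}"
  define F where "F d = Uf \<tau> (m div d) (l div d)" for d
  define g where "g d = moebius_mu d * F d" for d
  define E where "E = 2 * multiplicity p m"
  define D0 where "D0 = {d\<in>D. \<not> p dvd d}"
  define D1 where "D1 = {d\<in>D. p dvd d}"
  define D0' where "D0' = {d\<in>D0. p * d \<in> D}"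
  have p0: "0 < p" using pr prime_gt_0_nat by blast
  have finD: "finite D"
  proof (rule finite_subset[of D "{d. d dvd m}"])
    show "D \<subseteq> {d. d dvd m}" unfolding D_def by auto
    show "finite {d. d dvd m}" using m1 by (simp add: finite_divisors_nat)
  qed
  have D0fin: "finite D0" "finite D1" "finite D0'" using finD unfolding D0_def D1_def D0'_def by auto
  have Dnz: "d \<noteq> 0" if "d \<in> D" for d using that m1 unfolding D_def by auto
  have split: "sum g D = sum g D0 + sum g D1"
  proof -
    have "D = D0 \<union> D1" "D0 \<inter> D1 = {}" unfolding D0_def D1_def by auto
    then show ?thesis using sum.union_disjoint[OF D0fin(1,2)] by simp
  qed
  have img: "(\<lambda>d. p * d) ` D0' \<subseteq> D1" unfolding D0'_def D0_def D1_def by auto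
  have inj: "inj_on (\<lambda>d. p * d) D0'" using p0 by (simp add: inj_on_def)
  have c1: "sum g D1 = (\<Sum>d\<in>D0'. g (p * d))"
  proof -
    have "(\<Sum>d\<in>D0'. g (p * d)) = sum g ((\<lambda>d. p * d) ` D0')"
      using sum.reindex[OF inj, of g] by simp
    also have "\<dots> = sum g D1"
    proof (rule sum.mono_neutral_left[OF D0fin(2) img])
      show "\<forall>i\<in>D1 - (\<lambda>d. p * d) ` D0'. g i = 0"
      proof
        fix i assume i: "i \<in> D1 - (\<lambda>d. p * d) ` D0'"
        then have iD: "i \<in> D" and pi: "p dvd i" unfolding D1_def by auto
        define j where "j = i div p"
        have ij: "i = p * j" unfolding j_def using pi by simp
        have jD: "j \<in> D" using iD unfolding D_def ij by (auto intro: dvd_mult_left)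
        have "p dvd j"
        proof (rule ccontr)
          assume "\<not> p dvd j"
          then have "j \<in> D0'" unfolding D0'_def D0_def using jD iD ij by simp
          then show False using i ij by auto
        qed
        then have "p^2 dvd i" unfolding ij by (simp add: power2_eq_square mult_dvd_mono)
        then show "g i = 0" unfolding g_def using mu_p2[OF pr] by simp
      qed
    qed
    finally show ?thesis by simp
  qed
  have c1': "(\<Sum>d\<in>D0'. g (p * d)) = - (\<Sum>d\<in>D0'. moebius_mu d * F (p * d))"
  proof -
    have "(\<Sum>d\<in>D0'. g (p * d)) = (\<Sum>d\<in>D0'. - (moebius_mu d * F (p * d)))"
    proof (rule sum.cong[OF refl])
      fix d assume "d \<in> D0'"
      then have "\<not> p dvd d" "d \<noteq> 0" using Dnz unfolding D0'_def D0_def by auto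
      then show "g (p * d) = - (moebius_mu d * F (p * d))" unfolding g_def using mu_pd[OF pr] by simp
    qed
    then show ?thesis by (simp add: sum_negf)
  qed
  have c0: "sum g D0 = sum g D0' + sum g (D0 - D0')"
    using sum.subset_diff[of D0' D0 g] D0fin(1) unfolding D0'_def by auto
  have Seq: "sum g D = (\<Sum>d\<in>D0'. moebius_mu d * (F d - F (p * d))) + sum g (D0 - D0')"
  proof -
    have "sum g D = sum g D0' + sum g (D0 - D0') - (\<Sum>d\<in>D0'. moebius_mu d * F (p * d))"
      unfolding split c1 c1' c0 by simp
    moreover have "(\<Sum>d\<in>D0'. moebius_mu d * (F d - F (p * d))) = sum g D0' - (\<Sum>d\<in>D0'. moebius_mu d * F (p * d))"
      unfolding g_def by (simp add: right_diff_distrib sum_subtractf)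
    ultimately show ?thesis by simp
  qed
  have a: "int p ^ E dvd (\<Sum>d\<in>D0'. moebius_mu d * (F d - F (p * d)))"
  proof (rule dvd_sum)
    fix d assume d: "d \<in> D0'"
    then have dD: "d \<in> D" and npd: "\<not> p dvd d" and pdD: "p * d \<in> D" unfolding D0'_def D0_def by auto
    define M' where "M' = m div (p * d)"
    define L' where "L' = l div (p * d)"
    have pdm: "p * d dvd m" and pdl: "p * d dvd l" using pdD unfolding D_def by auto
    have e1: "m div d = p * M'" unfolding M'_def using pdm p0 Dnz[OF dD] by (rule div_pd)
    have e2: "l div d = p * L'" unfolding L'_def using pdl p0 Dnz[OF dD] by (rule div_pd)
    have M1: "1 \<le> M'"
    proof -
      have "m = (p * d) * M'" unfolding M'_def using pdm by simp
      then show ?thesis using m1 by (cases M') auto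
    qed
    have Fpd: "F (p * d) = Uf \<tau> M' L'" unfolding F_def M'_def L'_def ..
    have Fd: "F d = Uf \<tau> (p * M') (p * L')" unfolding F_def e1 e2 ..
    have "int p ^ (2 * multiplicity p (p * M')) dvd Uf \<tau> (p * M') (p * L') - Uf \<tau> M' L'"
      by (rule lemB[OF pr M1])
    moreover have "multiplicity p (p * M') = multiplicity p m"
      unfolding e1[symmetric] using mult_div_eq[OF pr npd] dD unfolding D_def by simp
    ultimately have "int p ^ E dvd F d - F (p * d)" unfolding Fpd Fd E_def by simp
    then show "int p ^ E dvd moebius_mu d * (F d - F (p * d))" by simp
  qed
  have b: "int p ^ E dvd sum g (D0 - D0')"
  proof (rule dvd_sum)
    fix d assume d: "d \<in> D0 - D0'"
    then have dD: "d \<in> D" and npd: "\<not> p dvd d" and npdD: "p * d \<notin> D" unfolding D0'_def D0_def by auto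
    have dm: "d dvd m" and dl: "d dvd l" using dD unfolding D_def by auto
    have M1: "1 \<le> m div d"
    proof -
      have "m = d * (m div d)" using dm by simp
      then show ?thesis using m1 by (cases "m div d") auto
    qed
    have nd: "\<not> (p dvd m div d \<and> p dvd l div d)"
    proof
      assume h: "p dvd m div d \<and> p dvd l div d"
      have "p * d dvd m" using h dm by (intro pd_dvd) auto
      moreover have "p * d dvd l" using h dl by (intro pd_dvd) auto
      ultimately show False using npdD unfolding D_def by simp
    qed
    have "int p ^ (2 * multiplicity p (m div d)) dvd Uf \<tau> (m div d) (l div d)"
      by (rule lemA[OF pr M1 nd])
    moreover have "multiplicity p (m div d) = multiplicity p m" using mult_div_eq[OF pr npd dm] .
    ultimately show "int p ^ E dvd g d" unfolding g_def F_def E_def by simp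
  qed
  have "int p ^ E dvd sum g D" unfolding Seq using a b by (rule dvd_add)
  then show ?thesis unfolding E_def g_def F_def D_def .
qed



theorem theorem4p5:
  fixes \<tau> :: int and m l :: nat
  assumes "m \<ge> 1"
  shows "n_inv \<tau> m l \<in> \<int>"
proof -
  define D where "D = {d. d dvd m \<and> d dvd l}"
  define S where "S = (\<Sum>d\<in>D. moebius_mu d * Uf \<tau> (m div d) (l div d))"
  have m0: "m \<noteq> 0" using assms by simp
  have eq: "n_inv \<tau> m l = - of_int S / of_nat (m^2)"
  proof -
    have "n_inv \<tau> m l = (\<Sum>d\<in>D. - of_int (moebius_mu d * Uf \<tau> (m div d) (l div d)) / of_nat (m^2))"
      unfolding n_inv_def D_def[symmetric]
    proof (rule sum.cong[OF refl])
      fix d assume "d \<in> D"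
      then have dm: "d dvd m" unfolding D_def by simp
      then have d0: "d \<noteq> 0" using m0 by auto
      have md: "d * (m div d) = m" using dm by simp
      have e: "(of_nat (d^2) :: rat) * of_nat ((m div d)^2) = of_nat (m^2)"
        by (metis md of_nat_mult power_mult_distrib)
      have "m div d \<noteq> 0" using md m0 by (metis mult_0_right)
      then have n1: "(of_nat ((m div d)^2) :: rat) \<noteq> 0" by simp
      have n2: "(of_nat (d^2) :: rat) \<noteq> 0" using d0 by simp
      define a where "a = (of_nat (d^2) :: rat)"
      define b where "b = (of_nat ((m div d)^2) :: rat)"
      define u where "u = (of_int (moebius_mu d) :: rat)"
      define v where "v = (of_int (Uf \<tau> (m div d) (l div d)) :: rat)"
      have "u / a * (- v / b) = - (u * v) / (a * b)" using n1 n2 unfolding a_def b_def by (simp add: field_simps)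
      then show "of_int (moebius_mu d) / of_nat (d^2) * c_coeff \<tau> (m div d) (l div d) =
          - of_int (moebius_mu d * Uf \<tau> (m div d) (l div d)) / of_nat (m^2)"
        unfolding c_coeff_Uf e[symmetric] a_def b_def u_def v_def by simp
    qed
    also have "\<dots> = - of_int S / of_nat (m^2)"
      unfolding S_def by (simp add: sum_divide_distrib sum_negf)
    finally show ?thesis .
  qed
  have "int (m^2) dvd S"
  proof (rule dvd_from_primes)
    show "m^2 \<noteq> 0" using m0 by simp
    fix p :: nat assume pr: "prime p"
    have "multiplicity p (m^2) = 2 * multiplicity p m"
      using prime_elem_multiplicity_power_distrib[of p m 2] pr m0 by simp
    then show "int p ^ multiplicity p (m^2) dvd S"
      unfolding S_def D_def using per_prime[OF pr assms] by simp
  qed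
  then obtain k where k: "S = int (m^2) * k" by blast
  have "n_inv \<tau> m l = of_int (- k)"
    unfolding eq k using m0 by simp
  then show ?thesis by simp
qed


end
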